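(* $$\sum_{n=1}^\infty \frac{H_n \binom{2n}{n}}{n(n+1)\, 2^{2n}} = \frac{\pi^2}{3} - 4\log 2.$$
   Context: $H_n=\sum_{k=1}^n \frac{1}{k}$ denotes the $n$-th harmonic number and $\binom{2n}{n}$ the central binomial coefficient; $\log$ is the natural logarithm. *)

theory Defs
  imports "HOL-Analysis.Analysis"
begin

end

theory Submission
  imports Defs "HOL-Real_Asymp.Real_Asymp"
begin

definition cb :: "nat \<Rightarrow> real" where
  "cb n = real ((2*n) choose n) / 4 ^ n"

lemma choose_rec: "real ((2*Suc n) choose Suc n) * real (Suc n) = 2 * real (2*n+1) * real ((2*n) choose n)"
proof -
  define X where "X = real ((Suc (Suc (2*n))) choose Suc n)"
  define Y where "Y = real (Suc (2*n) choose n)"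
  define Z where "Z = real ((2*n) choose n)"
  have a: "real (Suc (Suc (2*n))) * Y = X * real (Suc n)"
    unfolding X_def Y_def by (metis Suc_times_binomial_eq of_nat_mult)
  have b0: "real (Suc (2*n)) * Z = real (Suc (2*n) choose Suc n) * real (Suc n)"
    unfolding Z_def by (metis Suc_times_binomial_eq of_nat_mult)
  have c: "Suc (2*n) choose Suc n = Suc (2*n) choose n"
    using binomial_symmetric[of n "Suc (2*n)"] by (simp add: Suc_diff_le)
  have b: "real (Suc (2*n)) * Z = Y * real (Suc n)" using b0 c Y_def by simp
  have "X * real (Suc n) = 2 * (real (Suc n) * Y)" using a by (simp add: algebra_simps)
  also have "\<dots> = 2 * (real (Suc (2*n)) * Z)" using b by (simp add: algebra_simps)
  finally have "X * real (Suc n) = 2 * real (2*n+1) * Z" by simp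
  moreover have "2 * Suc n = Suc (Suc (2*n))" by simp
  ultimately show ?thesis unfolding X_def Z_def by simp
qed

lemma cb_0 [simp]: "cb 0 = 1" by (simp add: cb_def)

lemma cb_Suc: "cb (Suc n) = cb n * (2*n+1) / (2*n+2)"
proof -
  have "cb (Suc n) * (2*n+2) = real ((2*Suc n) choose Suc n) * real (Suc n) * 2 / 4^Suc n"
    by (simp add: cb_def field_simps)
  also have "\<dots> = cb n * (2*n+1)"
    by (subst choose_rec) (simp add: cb_def field_simps)
  finally show ?thesis by (simp add: field_simps)
qed

lemma cb_1 [simp]: "cb (Suc 0) = 1/2" by (simp add: cb_Suc)

lemma cb_pos: "cb n > 0" by (simp add: cb_def)

lemma cb_rec2: "cb (Suc n) * (2*n+2) = cb n * (2*n+1)"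
  by (simp add: cb_Suc field_simps)

lemma cb_dec: "cb (Suc n) \<le> cb n"
  using cb_pos[of n] by (simp add: cb_Suc field_simps)

lemma cb_le1: "cb n \<le> 1"
  by (induction n) (use cb_dec order_trans in auto)

lemma cb_sq: "cb n ^ 2 * (2*n+1) \<le> 1"
proof (induction n)
  case (Suc n)
  have "cb (Suc n) ^ 2 * (2 * Suc n + 1) = cb n ^ 2 * ((2*real n+1)^2 * (2*real n+3) / (2*real n+2)^2)"
    by (simp add: cb_Suc field_simps power2_eq_square)
  also have "(2*real n+1)^2 * (2*real n+3) / (2*real n+2)^2 \<le> (2*real n+1)"
  proof -
    have "(2*real n+1)*(2*real n+3) \<le> (2*real n+2)^2" by (simp add: power2_eq_square algebra_simps)
    hence "(2*real n+1)*((2*real n+1)*(2*real n+3)) \<le> (2*real n+1)*(2*real n+2)^2" by (intro mult_left_mono) auto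
    moreover have "0 < (2*real n+2)^2" by simp
    ultimately show ?thesis by (simp add: pos_divide_le_eq power2_eq_square algebra_simps)
  qed
  hence "cb n ^ 2 * ((2*real n+1)^2 * (2*real n+3) / (2*real n+2)^2) \<le> cb n ^2 * (2*real n+1)"
    by (intro mult_left_mono) auto
  finally show ?case using Suc by (simp add: add.commute)
qed simp

lemma cb_lower: "n \<ge> 1 \<Longrightarrow> cb n * (2*n) \<ge> 1"
proof (induction n rule: dec_induct)
  case (step n)
  have "cb (Suc n) * (2 * Suc n) = cb n * (2*n+1)" using cb_rec2[of n] by simp
  also have "\<dots> \<ge> cb n * (2*n)" using cb_pos[of n] by (intro mult_left_mono) auto
  finally show ?case using step by linarith
qed simp

lemma cb_upper: "cb n \<le> 1 / sqrt (2*real n+1)"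
proof -
  have "cb n ^ 2 \<le> 1 / (2*n+1)" using cb_sq[of n] by (simp add: field_simps)
  hence "sqrt (cb n ^ 2) \<le> sqrt (1/(2*n+1))" by (rule real_sqrt_le_mono)
  thus ?thesis using cb_pos[of n] by (simp add: real_sqrt_divide add.commute)
qed

lemma cb_lim: "cb \<longlonglongrightarrow> 0"
proof (rule tendsto_sandwich[of "\<lambda>_. 0" _ _ "\<lambda>n. 1 / sqrt (2*real n+1)"])
  show "\<forall>\<^sub>F n in sequentially. 0 \<le> cb n" using cb_pos by (simp add: less_imp_le)
  show "\<forall>\<^sub>F n in sequentially. cb n \<le> 1 / sqrt (2*real n+1)" using cb_upper by (intro always_eventually allI) blast
  show "(\<lambda>n. 1 / sqrt (2*real n+1)) \<longlonglongrightarrow> 0" by real_asymp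
qed simp

lemma aux_uv:
  fixes p q :: real
  assumes "p \<noteq> 0" "q \<noteq> 0" "q \<noteq> p"
  shows "(1/p - 1/q)/(q-p) = 1/(p*q)"
  using assms by (simp add: field_simps)

lemma aux_hk:
  fixes x y :: real
  assumes "x \<ge> 0" "y \<ge> 0"
  shows "(1/(y+1) - 1/(y+1+(x+1))) / (x+1) = 1/((y+1)*(y + x + 2))"
proof -
  have h: "(1/(y+1) - 1/(y+x+2)) / ((y+x+2) - (y+1)) = 1/((y+1)*(y + x + 2))"
    by (rule aux_uv) (use assms in auto)
  have e: "(y+x+2) - (y+1) = x+1" "y+1+(x+1) = y+x+2" by simp_all
  show ?thesis unfolding e(2) using h unfolding e(1) .
qed

lemma aux_ucb:
  fixes x K c :: real
  assumes "x \<ge> 0" "K > 0"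
  shows "(2*K*(c*(2*x+1)/(2*x+2)/(x+1+K)) + 2*(c - c*(2*x+1)/(2*x+2)))/(2*K+1) = c/(x+(K+1))"
proof -
  define A where "A = 2*x+2"
  define B where "B = x+1+K"
  define D where "D = 2*K+1"
  have A: "A > 0" and B: "B > 0" and D: "D > 0" using assms by (auto simp: A_def B_def D_def)
  have e1: "2*x+1 = A - 1" by (simp add: A_def)
  have e2: "x+(K+1) = B" by (simp add: B_def)
  have e3: "K*(A-1) + B = D*A/2" by (simp add: A_def B_def D_def algebra_simps)
  have "2*K*(c*(A-1)/A/B) + 2*(c - c*(A-1)/A) = (2*c/(A*B))*(K*(A-1) + B)"
    using A B by (simp add: field_simps)
  also have "\<dots> = c * D / B" unfolding e3 using A B by (simp add: field_simps)
  finally have "(2*K*(c*(A-1)/A/B) + 2*(c - c*(A-1)/A))/D = c/B" using D by simp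
  thus ?thesis unfolding e1 e2 D_def by (simp add: B_def A_def)
qed

lemma aux_eq2:
  fixes K C :: real
  assumes K: "K > 0" and C: "C > 0"
  shows "(2*K*(1/(K*C) - 1/K) + 2*1)/(2*K+1) = 1/((K+1)*(C*(2*K+1)/(2*K+2)))"
proof -
  have a: "2*K*(1/(K*C) - 1/K) + 2*1 = 2/C" using K C by (simp add: field_simps)
  have b: "(K+1)*(C*(2*K+1)/(2*K+2)) = C*(2*K+1)/2"
  proof -
    have "2*K+2 = 2*(K+1)" by simp
    thus ?thesis using K by (simp add: field_simps)
  qed
  have "2*K+1 > 0" using K by simp
  show ?thesis unfolding a b using C \<open>2*K+1>0\<close> by (simp add: field_simps)
qed

lemma ucb: "(\<lambda>n. cb n / (real n + real (Suc k))) sums (1 / (real (Suc k) * cb (Suc k)))"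
proof (induction k)
  case 0
  have eq: "cb n / (real n + real (Suc 0)) = 2 * (cb n - cb (Suc n))" for n
    using cb_rec2[of n] cb_pos[of n] by (simp add: cb_Suc field_simps)
  have "(\<lambda>n. cb n - cb (Suc n)) sums (cb 0 - 0)" by (rule telescope_sums'[OF cb_lim])
  hence "(\<lambda>n. 2 * (cb n - cb (Suc n))) sums (2 * 1)" by (intro sums_mult) simp
  thus ?case by (simp only: eq) simp
next
  case (Suc k)
  define K where "K = real (Suc k)"
  have K: "K > 0" by (simp add: K_def)
  have ck: "cb (Suc k) > 0" by (rule cb_pos)
  have IH: "(\<lambda>n. cb n / (real n + K)) sums (1 / (K * cb (Suc k)))" using Suc K_def by simp
  have s1: "(\<lambda>n. cb (Suc n) / (real (Suc n) + K)) sums (1 / (K * cb (Suc k)) - 1 / K)"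
    using IH by (subst sums_Suc_iff) simp
  have s2: "(\<lambda>n. cb n - cb (Suc n)) sums 1"
    using telescope_sums'[OF cb_lim] by simp
  have s3: "(\<lambda>n. (2*K * (cb (Suc n) / (real (Suc n) + K)) + 2 * (cb n - cb (Suc n))) / (2*K+1))
      sums ((2*K * (1 / (K * cb (Suc k)) - 1 / K) + 2 * 1) / (2*K+1))"
    by (intro sums_divide sums_add sums_mult s1 s2)
  have eq: "(2*K * (cb (Suc n) / (real (Suc n) + K)) + 2 * (cb n - cb (Suc n))) / (2*K+1)
      = cb n / (real n + real (Suc (Suc k)))" for n
    using aux_ucb[of "real n" K "cb n"] K unfolding K_def by (simp add: cb_Suc add_ac)
  have eq2: "(2*K * (1 / (K * cb (Suc k)) - 1 / K) + 2 * 1) / (2*K+1)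
      = 1 / (real (Suc (Suc k)) * cb (Suc (Suc k)))"
    using aux_eq2[OF K ck] unfolding K_def by (simp add: cb_Suc[of "Suc k"])
  show ?case using s3 unfolding eq eq2 .
qed

lemma harm_tel: "(\<lambda>k. 1/(real k+1) - 1/(real k+1+real m)) sums harm m"
proof (induction m)
  case 0
  then show ?case by (simp add: harm_def)
next
  case (Suc m)
  have l: "(\<lambda>k. 1/(real k+1+real m)) \<longlonglongrightarrow> 0" by real_asymp
  have "(\<lambda>k. 1/(real k+1+real m) - 1/(real (Suc k)+1+real m)) sums (1/(real 0+1+real m) - 0)"
    by (rule telescope_sums'[OF l])
  hence "(\<lambda>k. (1/(real k+1) - 1/(real k+1+real m)) + (1/(real k+1+real m) - 1/(real (Suc k)+1+real m)))
     sums (harm m + (1/(real 0+1+real m) - 0))"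
    by (intro sums_add Suc)
  moreover have "harm m + (1/(real 0+1+real m) - 0) = (harm (Suc m) :: real)"
    by (simp add: harm_Suc field_simps)
  ultimately show ?case by (simp add: algebra_simps)
qed

lemma harm_kernel: "(\<lambda>k. 1/((real k+1)*(real k + real n + 2))) sums (harm (Suc n) / real (Suc n))"
proof -
  have "(\<lambda>k. (1/(real k+1) - 1/(real k+1+real (Suc n))) / real (Suc n)) sums (harm (Suc n) / real (Suc n))"
    by (intro sums_divide harm_tel)
  moreover have "(1/(real k+1) - 1/(real k+1+real (Suc n))) / real (Suc n) = 1/((real k+1)*(real k + real n + 2))" for k
    using aux_hk[of "real n" "real k"] by (simp add: add_ac)
  ultimately show ?thesis by simp
qed

lemma double_sums_swap:
  fixes F :: "nat \<Rightarrow> nat \<Rightarrow> real"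
  assumes nn: "\<And>k n. F k n \<ge> 0" and g: "\<And>k. (\<lambda>n. F k n) sums g k"
    and h: "\<And>n. (\<lambda>k. F k n) sums h n" and G: "g sums G"
  shows "h sums G"
proof -
  have gnn: "g k \<ge> 0" for k by (rule sums_le[OF _ sums_zero g[of k]]) (use nn in auto)
  have ghs: "(g has_sum G) UNIV" by (rule sums_nonneg_imp_has_sum[OF G gnn])
  have inner: "((\<lambda>n. (\<lambda>(k,n). F k n) (k, n)) has_sum g k) UNIV" for k
    using sums_nonneg_imp_has_sum[OF g nn] by simp
  have summ: "(\<lambda>(k,n). F k n) summable_on (UNIV \<times> UNIV)"
    by (rule summable_on_SigmaI[where g = g]) (use inner ghs nn in \<open>auto simp: has_sum_imp_summable\<close>)
  have "((\<lambda>(k,n). F k n) has_sum G) (UNIV \<times> UNIV)"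
    by (rule has_sum_SigmaI[where g = g]) (use inner ghs summ in auto)
  hence "((\<lambda>(x,y). (\<lambda>(k,n). F k n) (y,x)) has_sum G) (UNIV \<times> UNIV)"
    by (subst (asm) has_sum_swap)
  hence sw: "((\<lambda>(n,k). F k n) has_sum G) (UNIV \<times> UNIV)" by (simp add: case_prod_unfold)
  have inner2: "((\<lambda>k. (\<lambda>(n,k). F k n) (n, k)) has_sum h n) UNIV" for n
    using sums_nonneg_imp_has_sum[OF h nn] by simp
  have "(h has_sum G) UNIV"
    by (rule has_sum_SigmaD[OF sw]) (use inner2 in auto)
  thus ?thesis by (rule has_sum_imp_sums)
qed

lemma abel_nonneg:
  fixes a :: "nat \<Rightarrow> real" and F :: "real \<Rightarrow> real"
  assumes nn: "\<And>n. a n \<ge> 0"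
    and S: "\<And>y. 0 < y \<Longrightarrow> y < 1 \<Longrightarrow> (\<lambda>n. a n * y^n) sums F y"
    and L: "(F \<longlongrightarrow> L) (at_left 1)"
  shows "a sums L"
proof -
  have ev: "eventually (\<lambda>y. y \<in> {0<..<1}) (at_left (1::real))"
    by (rule eventually_at_left_real) simp
  have part: "sum a {..<N} \<le> L" for N
  proof -
    have t: "((\<lambda>y. \<Sum>n<N. a n * y^n) \<longlongrightarrow> (\<Sum>n<N. a n * 1^n)) (at_left 1)"
      by (intro tendsto_intros)
    have "eventually (\<lambda>y. (\<Sum>n<N. a n * y^n) \<le> F y) (at_left 1)"
      using ev
    proof eventually_elim
      case (elim y)
      hence s: "(\<lambda>n. a n * y^n) sums F y" using S by auto
      have "(\<Sum>n<N. a n * y^n) \<le> (\<Sum>n. a n * y^n)"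
        by (rule sum_le_suminf) (use s elim nn in \<open>auto simp: sums_iff\<close>)
      thus ?case using s by (simp add: sums_iff)
    qed
    hence "(\<Sum>n<N. a n * 1^n) \<le> L" by (rule tendsto_le[OF _ L t, rotated]) simp
    thus ?thesis by simp
  qed
  have summ: "summable a"
  proof (rule bounded_imp_summable[OF nn])
    fix n show "(\<Sum>k\<le>n. a k) \<le> L" using part[of "Suc n"] by (simp add: lessThan_Suc_atMost)
  qed
  have le1: "suminf a \<le> L" by (rule suminf_le_const[OF summ part])
  have "eventually (\<lambda>y. F y \<le> suminf a) (at_left 1)"
    using ev
  proof eventually_elim
    case (elim y)
    hence s: "(\<lambda>n. a n * y^n) sums F y" using S by auto
    have "(\<Sum>n. a n * y^n) \<le> suminf a"
    proof (rule suminf_le)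
      fix n show "a n * y^n \<le> a n"
        using elim nn[of n] by (auto intro!: mult_left_le power_le_one)
    qed (use s summ in \<open>auto simp: sums_iff\<close>)
    thus ?case using s by (simp add: sums_iff)
  qed
  hence le2: "L \<le> suminf a" by (rule tendsto_le[OF _ tendsto_const L, rotated]) simp
  show ?thesis using le1 le2 summ by (simp add: sums_iff)
qed

lemma gbinomial_Suc': "(a gchoose Suc n) = (a gchoose n) * (a - of_nat n) / of_nat (Suc n)"
  for a :: real
proof -
  have "(a gchoose Suc n) * fact (Suc n) = (\<Prod>i = 0..<Suc n. a - of_nat i)"
    by (rule gbinomial_mult_fact')
  also have "\<dots> = (\<Prod>i = 0..<n. a - of_nat i) * (a - of_nat n)" by simp
  also have "(\<Prod>i = 0..<n. a - of_nat i) = (a gchoose n) * fact n"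
    by (rule gbinomial_mult_fact'[symmetric])
  finally have e: "(a gchoose Suc n) * fact (Suc n) = (a gchoose n) * fact n * (a - of_nat n)" .
  have "((a gchoose Suc n) * of_nat (Suc n)) * fact n = ((a gchoose n) * (a - of_nat n)) * fact n"
    using e by (simp only: fact_Suc of_nat_mult mult_ac)
  hence "(a gchoose Suc n) * of_nat (Suc n) = (a gchoose n) * (a - of_nat n)" by simp
  thus ?thesis by (simp add: field_simps del: of_nat_Suc)
qed

lemma gbin_cb: "((-1/2::real) gchoose n) * (-1)^n = cb n"
proof (induction n)
  case 0 then show ?case by simp
next
  case (Suc n)
  have "((-1/2::real) gchoose Suc n) * (-1)^Suc n
      = (((-1/2::real) gchoose n) * (-1)^n) * ((2*real n+1)/(2*real n+2))"
    by (simp add: gbinomial_Suc' field_simps)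
  also have "\<dots> = cb (Suc n)" using Suc by (simp add: cb_Suc add.commute)
  finally show ?case .
qed

lemma P_sums:
  assumes "\<bar>y\<bar> < 1"
  shows "(\<lambda>n. cb n * y^n) sums (1 / sqrt (1 - y))"
proof -
  have "\<bar>-y\<bar> < 1" using assms by simp
  from gen_binomial_real[OF this, of "-1/2"]
  have "(\<lambda>n. ((-1/2) gchoose n) * (-y)^n) sums (1 + - y) powr (-1/2)" .
  moreover have "((-1/2) gchoose n) * (-y)^n = cb n * y^n" for n
    using gbin_cb[of n] by (simp add: power_minus[of y] mult_ac)
  moreover have "(1 + - y) powr (-1/2) = 1 / sqrt (1 - y)"
  proof -
    have "(1 - y) powr (-(1/2)) = 1 / (1-y) powr (1/2)" by (rule powr_minus_divide)
    also have "\<dots> = 1 / sqrt (1-y)" using assms by (simp add: powr_half_sqrt)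
    finally show ?thesis by simp
  qed
  ultimately show ?thesis by simp
qed

definition ea :: "nat \<Rightarrow> real" where "ea n = cb n / real n"

lemma ea_bound: "0 \<le> ea n \<and> ea n \<le> 1"
proof (cases "n = 0")
  case True then show ?thesis by (simp add: ea_def)
next
  case False
  have "cb n \<le> 1" by (rule cb_le1)
  also have "1 \<le> real n" using False by simp
  finally show ?thesis using False cb_pos[of n] by (simp add: ea_def field_simps)
qed

lemma ea_summable: "\<bar>y\<bar> < 1 \<Longrightarrow> summable (\<lambda>n. ea n * y^n)"
  by (rule summable_comparison_test'[OF summable_geometric[of "\<bar>y\<bar>"]])
     (use ea_bound in \<open>auto simp: abs_mult power_abs intro!: mult_left_le_one_le\<close>)

lemma diffs_ea: "diffs ea n = cb (Suc n)"
  by (simp add: diffs_def ea_def)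

lemma aux_e: "(r::real) > 0 \<Longrightarrow> 0 - 2 * (inverse (1 + r) * (0 + inverse r / 2 * (0 - 1))) = 1 / (r * (1 + r))"
  by (simp add: inverse_eq_divide)

lemma R_deriv:
  assumes "y < 1"
  shows "((\<lambda>y. 2 * ln 2 - 2 * ln (1 + sqrt (1 - y))) has_real_derivative
           1 / (sqrt (1-y) * (1 + sqrt (1-y)))) (at y)"
proof -
  have s: "sqrt (1 - y) > 0" using assms by simp
  have d1: "((\<lambda>y. 1 - y) has_real_derivative (0 - 1)) (at y)"
    by (intro DERIV_diff DERIV_const DERIV_ident)
  have d2: "((\<lambda>y. sqrt (1 - y)) has_real_derivative (inverse (sqrt (1-y)) / 2 * (0 - 1))) (at y)"
    by (rule DERIV_chain2[OF DERIV_real_sqrt d1]) (use assms in simp)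
  have d3: "((\<lambda>y. 1 + sqrt (1 - y)) has_real_derivative (0 + inverse (sqrt (1-y)) / 2 * (0 - 1))) (at y)"
    by (intro DERIV_add DERIV_const d2)
  have d4: "((\<lambda>y. ln (1 + sqrt (1 - y))) has_real_derivative
      (inverse (1 + sqrt (1-y)) * (0 + inverse (sqrt (1-y)) / 2 * (0 - 1)))) (at y)"
    by (rule DERIV_chain2[OF DERIV_ln d3]) (use s in linarith)
  have d5: "((\<lambda>y. 2 * ln 2 - 2 * ln (1 + sqrt (1 - y))) has_real_derivative
      (0 - 2 * (inverse (1 + sqrt (1-y)) * (0 + inverse (sqrt (1-y)) / 2 * (0 - 1))))) (at y)"
    by (intro DERIV_diff DERIV_const DERIV_cmult d4)
  have e: "(0 - 2 * (inverse (1 + sqrt (1-y)) * (0 + inverse (sqrt (1-y)) / 2 * (0 - 1))))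
      = 1 / (sqrt (1-y) * (1 + sqrt (1-y)))"
    by (rule aux_e[OF s])
  show ?thesis using d5 unfolding e .
qed

lemma Q_closed:
  assumes "\<bar>y\<bar> < 1"
  shows "(\<Sum>n. cb (Suc n) * y^n) = 1 / (sqrt (1-y) * (1 + sqrt (1-y)))"
proof (cases "y = 0")
  case True then show ?thesis by simp
next
  case False
  define s where "s = sqrt (1 - y)"
  have s: "s > 0" "s^2 = 1 - y" using assms by (auto simp: s_def)
  have s1: "s \<noteq> 1" using False s(2) by auto
  have P: "(\<lambda>n. cb n * y^n) sums (1/s)" using P_sums[OF assms] by (simp add: s_def)
  have "(\<lambda>n. cb (Suc n) * y^(Suc n)) sums (1/s - 1)"
    using P by (subst sums_Suc_iff) simp
  moreover have "(\<lambda>n. cb (Suc n) * y^(Suc n)) = (\<lambda>n. y * (cb (Suc n) * y^n))" by (simp add: mult_ac)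
  ultimately have "(\<lambda>n. y * (cb (Suc n) * y^n)) sums (1/s - 1)" by simp
  hence "(\<lambda>n. y * (cb (Suc n) * y^n) / y) sums ((1/s - 1) / y)"
    by (rule sums_divide)
  hence "(\<lambda>n. cb (Suc n) * y^n) sums ((1/s - 1) / y)"
    using False by simp
  hence "(\<Sum>n. cb (Suc n) * y^n) = (1/s - 1) / y" by (simp add: sums_iff)
  also have "\<dots> = (1/s - 1) / (1 - s^2)" using s by simp
  also have "\<dots> = 1 / (s * (1 + s))"
  proof -
    have e1: "1 - s^2 = (1 - s) * (1 + s)" by (simp add: power2_eq_square algebra_simps)
    have e2: "1/s - 1 = (1 - s) / s" using s by (simp add: field_simps)
    have nz: "1 - s \<noteq> 0" "s \<noteq> 0" using s s1 by auto
    have "((1 - s) / s) / ((1 - s) * (1 + s)) = 1 / (s * (1 + s))" using nz by simp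
    thus ?thesis unfolding e1 e2 .
  qed
  finally show ?thesis by (simp add: s_def)
qed

lemma ea_closed:
  assumes "\<bar>y\<bar> < 1"
  shows "(\<Sum>n. ea n * y^n) = 2 * ln 2 - 2 * ln (1 + sqrt (1 - y))"
proof -
  define f where "f = (\<lambda>y. (\<Sum>n. ea n * y^n) - (2 * ln 2 - 2 * ln (1 + sqrt (1 - y))))"
  have d: "(f has_real_derivative 0) (at x)" if x: "x \<in> {-1<..<1}" for x
  proof -
    have x': "norm x < 1" using x by auto
    have d1: "((\<lambda>y. \<Sum>n. ea n * y^n) has_field_derivative (\<Sum>n. diffs ea n * x^n)) (at x)"
      by (rule termdiffs_strong'[OF _ x']) (auto intro: ea_summable)
    have "(\<Sum>n. diffs ea n * x^n) = 1 / (sqrt (1-x) * (1 + sqrt (1-x)))"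
      unfolding diffs_ea using Q_closed x by auto
    with d1 have d1': "((\<lambda>y. \<Sum>n. ea n * y^n) has_field_derivative 1 / (sqrt (1-x) * (1 + sqrt (1-x)))) (at x)"
      by simp
    have "(f has_real_derivative (1 / (sqrt (1-x) * (1 + sqrt (1-x))) - 1 / (sqrt (1-x) * (1 + sqrt (1-x))))) (at x)"
      unfolding f_def by (intro DERIV_diff d1' R_deriv) (use x in auto)
    thus ?thesis by simp
  qed
  have "f y = f 0"
    by (rule DERIV_isconst3[of "-1" 1]) (use assms d in auto)
  also have "f 0 = 0" unfolding f_def by (subst powser_zero) (simp add: ea_def)
  finally show ?thesis by (simp add: f_def)
qed

lemma E_sums: "(\<lambda>n. cb (Suc n) / real (Suc n)) sums (2 * ln 2)"
proof -
  have "ea sums (2 * ln 2)"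
  proof (rule abel_nonneg[where F = "\<lambda>y. 2 * ln 2 - 2 * ln (1 + sqrt (1 - y))"])
    show "0 \<le> ea n" for n using ea_bound by simp
    show "(\<lambda>n. ea n * y^n) sums (2 * ln 2 - 2 * ln (1 + sqrt (1 - y)))" if "0 < y" "y < 1" for y
    proof -
      have y: "\<bar>y\<bar> < 1" using that by simp
      have "(\<lambda>n. ea n * y^n) sums (\<Sum>n. ea n * y^n)" by (rule summable_sums[OF ea_summable[OF y]])
      thus ?thesis using ea_closed[OF y] by simp
    qed
    have "((\<lambda>y. 2 * ln 2 - 2 * ln (1 + sqrt (1 - y))) \<longlongrightarrow> 2 * ln 2 - 2 * ln (1 + sqrt (1 - 1))) (at_left (1::real))"
      by (intro tendsto_intros) auto
    thus "((\<lambda>y. 2 * ln 2 - 2 * ln (1 + sqrt (1 - y))) \<longlongrightarrow> 2 * ln 2) (at_left (1::real))" by simp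
  qed
  hence "(\<lambda>n. ea (Suc n)) sums (2 * ln 2)" by (subst sums_Suc_iff) (simp add: ea_def)
  thus ?thesis by (simp add: ea_def)
qed

definition al :: "nat \<Rightarrow> real" where "al n = 1 / (2 * real n ^ 2 * cb n)"

lemma al_0 [simp]: "al 0 = 0" by (simp add: al_def)

lemma al_bound: "0 \<le> al n \<and> al n \<le> 1"
proof (cases "n = 0")
  case True then show ?thesis by simp
next
  case False
  have "1 \<le> cb n * (2 * n)" using cb_lower[of n] False by simp
  also have "\<dots> \<le> cb n * (2 * n) * real n" using False cb_pos[of n] by simp
  finally have "1 \<le> 2 * real n ^ 2 * cb n" by (simp add: power2_eq_square mult_ac)
  thus ?thesis using cb_pos[of n] False by (simp add: al_def field_simps)
qed

lemma al_summable: "\<bar>y\<bar> < 1 \<Longrightarrow> summable (\<lambda>n. al n * y^n)"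
  by (rule summable_comparison_test'[OF summable_geometric[of "\<bar>y\<bar>"]])
     (use al_bound in \<open>auto simp: abs_mult power_abs intro!: mult_left_le_one_le\<close>)

lemma d1_summable: "\<bar>y\<bar> < 1 \<Longrightarrow> summable (\<lambda>n. diffs al n * y^n)"
  by (rule termdiff_converges[of y 1]) (auto intro: al_summable)

lemma d2_summable: "\<bar>y\<bar> < 1 \<Longrightarrow> summable (\<lambda>n. diffs (diffs al) n * y^n)"
  by (rule termdiff_converges[of y 1]) (auto intro: d1_summable)

definition AA :: "real \<Rightarrow> real" where "AA y = (\<Sum>n. al n * y^n)"
definition A1 :: "real \<Rightarrow> real" where "A1 y = (\<Sum>n. diffs al n * y^n)"
definition A2 :: "real \<Rightarrow> real" where "A2 y = (\<Sum>n. diffs (diffs al) n * y^n)"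

lemma AA_deriv: "\<bar>y\<bar> < 1 \<Longrightarrow> (AA has_real_derivative A1 y) (at y)"
  unfolding AA_def A1_def
  by (rule termdiffs_strong'[of 1]) (auto intro: al_summable)

lemma A1_deriv: "\<bar>y\<bar> < 1 \<Longrightarrow> (A1 has_real_derivative A2 y) (at y)"
  unfolding A2_def A1_def
  by (rule termdiffs_strong'[of 1]) (auto intro: d1_summable)

lemma shift_sums:
  fixes g :: "nat \<Rightarrow> real"
  assumes "(\<lambda>n. g (Suc n) * y^n) sums S" "g 0 = 0"
  shows "(\<lambda>n. g n * y^n) sums (y*S)"
proof -
  have "(\<lambda>n. y * (g (Suc n) * y^n)) sums (y*S)" by (rule sums_mult[OF assms(1)])
  hence "(\<lambda>n. g (Suc n) * y^(Suc n)) sums (y*S)" by (simp add: mult_ac)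
  thus ?thesis using assms(2) by (subst (asm) sums_Suc_iff) simp
qed

lemma aux_coef:
  fixes x c :: real
  assumes x: "x > 0" and c: "c > 0"
  shows "(x+1)*(4*x+2) * (1 / (2*(x+1)^2 * (c*(2*x+1)/(2*x+2)))) = 4*x^2 * (1/(2*x^2*c))"
proof -
  have a: "2*(x+1)^2 * (c*(2*x+1)/(2*x+2)) = c*(x+1)*(2*x+1)"
    using x by (simp add: power2_eq_square field_simps)
  have b: "(x+1)*(4*x+2) = 2*((x+1)*(2*x+1))" by (simp add: algebra_simps)
  have gen: "\<And>k. k \<noteq> 0 \<Longrightarrow> c \<noteq> 0 \<Longrightarrow> (2*k) * (1/(c*k)) = 2/(c::real)" by simp
  have k0: "(x+1)*(2*x+1) \<noteq> 0" using x by simp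
  have c0: "c \<noteq> 0" using c by simp
  have "(x+1)*(4*x+2) * (1 / (c*(x+1)*(2*x+1))) = 2 / c"
    using gen[OF k0 c0] by (simp only: b mult.assoc)
  moreover have "4*x^2 * (1/(2*x^2*c)) = 2 / c" using x c by (simp add: power2_eq_square)
  ultimately show ?thesis unfolding a by simp
qed

lemma al_coef: "n \<ge> 1 \<Longrightarrow> (real n + 1)*(4*real n + 2) * al (Suc n) = 4 * real n^2 * al n"
  using aux_coef[of "real n" "cb n"] cb_pos[of n]
  by (simp add: al_def cb_Suc add_ac)

lemma coef_all:
  "4*(real n*(real (Suc n)*al (Suc n))) - 4*((real n - 1)*(real n*al n))
     + 2*(real (Suc n)*al (Suc n)) - 4*(real n*al n) = (if n = 0 then 2 else 0)"
proof (cases "n = 0")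
  case True
  then show ?thesis by (simp add: al_def)
next
  case False
  have "(real n + 1)*(4*real n + 2) * al (Suc n) = 4 * real n^2 * al n"
    using False by (intro al_coef) simp
  thus ?thesis using False by (simp add: algebra_simps power2_eq_square)
qed

lemma ode:
  assumes y: "\<bar>y\<bar> < 1"
  shows "4*y*(1-y)*A2 y + 2*(1-2*y)*A1 y = 2"
proof -
  have s1: "(\<lambda>n. diffs al n * y^n) sums A1 y"
    unfolding A1_def by (rule summable_sums[OF d1_summable[OF y]])
  have s2: "(\<lambda>n. diffs (diffs al) n * y^n) sums A2 y"
    unfolding A2_def by (rule summable_sums[OF d2_summable[OF y]])
  have t1: "(\<lambda>n. (real n * al n) * y^n) sums (y * A1 y)"
    by (rule shift_sums) (use s1 in \<open>simp_all add: diffs_def\<close>)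
  have t2: "(\<lambda>n. (real n * (real (Suc n) * al (Suc n))) * y^n) sums (y * A2 y)"
    by (rule shift_sums) (use s2 in \<open>simp_all add: diffs_def\<close>)
  have t3: "(\<lambda>n. ((real n - 1) * (real n * al n)) * y^n) sums (y * (y * A2 y))"
    by (rule shift_sums) (use t2 in \<open>simp_all\<close>)
  have "(\<lambda>n. 4 * ((real n * (real (Suc n) * al (Suc n))) * y^n)
           - 4 * (((real n - 1) * (real n * al n)) * y^n)
           + 2 * (diffs al n * y^n) - 4 * ((real n * al n) * y^n))
        sums (4 * (y * A2 y) - 4 * (y * (y * A2 y)) + 2 * A1 y - 4 * (y * A1 y))"
    by (intro sums_diff sums_add sums_mult t1 t2 t3 s1)
  moreover have "(\<lambda>n. 4 * ((real n * (real (Suc n) * al (Suc n))) * y^n)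
           - 4 * (((real n - 1) * (real n * al n)) * y^n)
           + 2 * (diffs al n * y^n) - 4 * ((real n * al n) * y^n))
        = (\<lambda>n. if n = 0 then 2 else 0)"
  proof
    fix n
    have "4 * ((real n * (real (Suc n) * al (Suc n))) * y^n)
           - 4 * (((real n - 1) * (real n * al n)) * y^n)
           + 2 * (diffs al n * y^n) - 4 * ((real n * al n) * y^n)
        = (4*(real n*(real (Suc n)*al (Suc n))) - 4*((real n - 1)*(real n*al n))
     + 2*(real (Suc n)*al (Suc n)) - 4*(real n*al n)) * y^n"
      by (simp add: diffs_def algebra_simps)
    also have "\<dots> = (if n = 0 then 2 else 0)" unfolding coef_all by simp
    finally show "4 * ((real n * (real (Suc n) * al (Suc n))) * y^n)
           - 4 * (((real n - 1) * (real n * al n)) * y^n)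
           + 2 * (diffs al n * y^n) - 4 * ((real n * al n) * y^n) = (if n = 0 then 2 else 0)" .
  qed
  ultimately have "(\<lambda>n. if n = 0 then 2 else 0) sums (4 * (y * A2 y) - 4 * (y * (y * A2 y)) + 2 * A1 y - 4 * (y * A1 y))"
    by simp
  moreover have "(\<lambda>n. if n = 0 then (2::real) else 0) sums 2"
    using sums_single[of 0 "\<lambda>_. 2::real"] by simp
  ultimately have "4 * (y * A2 y) - 4 * (y * (y * A2 y)) + 2 * A1 y - 4 * (y * A1 y) = 2"
    using sums_unique2 by blast
  thus ?thesis by (simp add: algebra_simps)
qed


lemma sin2_deriv: "((\<lambda>t. sin t ^ 2) has_real_derivative (2 * sin t * cos t)) (at t)"
proof -
  have "((\<lambda>t. sin t * sin t) has_real_derivative (cos t * sin t + cos t * sin t)) (at t)"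
    by (intro DERIV_mult DERIV_sin)
  thus ?thesis by (simp add: power2_eq_square algebra_simps)
qed

lemma sc_deriv: "((\<lambda>t. 2 * sin t * cos t) has_real_derivative (2 * cos t * cos t - 2 * sin t * sin t)) (at t)"
proof -
  have "((\<lambda>t. 2 * sin t * cos t) has_real_derivative (2 * cos t * cos t + (- sin t) * (2 * sin t))) (at t)"
    by (intro DERIV_mult DERIV_cmult DERIV_sin DERIV_cos)
  thus ?thesis by (simp add: algebra_simps)
qed

lemma in_range:
  assumes "t \<in> {-(pi/2)<..<pi/2}"
  shows "\<bar>sin t ^ 2\<bar> < 1" "cos t ^ 2 = 1 - sin t ^ 2"
proof -
  have c: "cos t > 0" using assms by (intro cos_gt_zero_pi) auto
  show cs: "cos t ^ 2 = 1 - sin t ^ 2" by (simp add: cos_squared_eq)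
  have "sin t ^ 2 < 1" using c cs by (smt (verit) zero_less_power)
  thus "\<bar>sin t ^ 2\<bar> < 1" by simp
qed

lemma G1_zero:
  assumes t: "t \<in> {-(pi/2)<..<pi/2}"
  shows "A1 (sin t ^ 2) * (2 * sin t * cos t) - 2 * t = 0"
proof -
  define G1 where "G1 = (\<lambda>t. A1 (sin t ^ 2) * (2 * sin t * cos t) - 2 * t)"
  have d: "(G1 has_real_derivative 0) (at x)" if x: "x \<in> {-(pi/2)<..<pi/2}" for x
  proof -
    note r = in_range[OF x]
    have d1: "((\<lambda>t. A1 (sin t ^ 2)) has_real_derivative (A2 (sin x ^ 2) * (2 * sin x * cos x))) (at x)"
      by (rule DERIV_chain2[OF A1_deriv[OF r(1)] sin2_deriv])
    have d2: "(G1 has_real_derivative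
       (A2 (sin x ^ 2) * (2 * sin x * cos x) * (2 * sin x * cos x)
        + (2 * cos x * cos x - 2 * sin x * sin x) * A1 (sin x ^ 2) - 2)) (at x)"
      unfolding G1_def
    proof (rule DERIV_diff)
      show "((\<lambda>t. A1 (sin t ^ 2) * (2 * sin t * cos t)) has_real_derivative
         (A2 (sin x ^ 2) * (2 * sin x * cos x) * (2 * sin x * cos x)
        + (2 * cos x * cos x - 2 * sin x * sin x) * A1 (sin x ^ 2))) (at x)"
        by (rule DERIV_mult[OF d1 sc_deriv])
      show "((\<lambda>t. 2 * t) has_real_derivative 2) (at x)"
        using DERIV_cmult[OF DERIV_ident, of 2] by simp
    qed
    define S where "S = sin x"
    define C where "C = cos x"
    define P where "P = A1 (sin x ^ 2)"
    define Q where "Q = A2 (sin x ^ 2)"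
    have CC: "C * C = 1 - S * S" using r(2) by (simp add: S_def C_def power2_eq_square)
    have o: "4*(S*S)*(1-S*S)*Q + 2*(1-2*(S*S))*P = 2"
      using ode[OF r(1)] by (simp add: S_def P_def Q_def power2_eq_square)
    have "Q * (2 * S * C) * (2 * S * C) + (2 * C * C - 2 * S * S) * P - 2
        = 4*(S*S)*(C*C)*Q + 2*((C*C) - S*S)*P - 2" by (simp add: algebra_simps)
    also have "\<dots> = 4*(S*S)*(1-S*S)*Q + 2*(1-2*(S*S))*P - 2" unfolding CC by (simp add: algebra_simps)
    also have "\<dots> = 0" using o by simp
    finally have "Q * (2 * S * C) * (2 * S * C) + (2 * C * C - 2 * S * S) * P - 2 = 0" .
    with d2 show ?thesis by (simp add: S_def C_def P_def Q_def)
  qed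
  have "G1 t = G1 0"
    by (rule DERIV_isconst3[of "-(pi/2)" "pi/2"]) (use t d in auto)
  also have "G1 0 = 0" by (simp add: G1_def)
  finally show ?thesis by (simp add: G1_def)
qed

lemma G_eq:
  assumes t: "t \<in> {-(pi/2)<..<pi/2}"
  shows "AA (sin t ^ 2) = t ^ 2"
proof -
  define G where "G = (\<lambda>t. AA (sin t ^ 2) - t ^ 2)"
  have d: "(G has_real_derivative 0) (at x)" if x: "x \<in> {-(pi/2)<..<pi/2}" for x
  proof -
    note r = in_range[OF x]
    have d1: "((\<lambda>t. AA (sin t ^ 2)) has_real_derivative (A1 (sin x ^ 2) * (2 * sin x * cos x))) (at x)"
      by (rule DERIV_chain2[OF AA_deriv[OF r(1)] sin2_deriv])
    have d2: "((\<lambda>t. t ^ 2) has_real_derivative (2 * x)) (at x)"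
      using DERIV_pow[of 2 x] by simp
    have "(G has_real_derivative (A1 (sin x ^ 2) * (2 * sin x * cos x) - 2 * x)) (at x)"
      unfolding G_def by (rule DERIV_diff[OF d1 d2])
    thus ?thesis using G1_zero[OF x] by simp
  qed
  have "G t = G 0"
    by (rule DERIV_isconst3[of "-(pi/2)" "pi/2"]) (use t d in auto)
  also have "G 0 = 0" by (simp add: G_def AA_def)
  finally show ?thesis by (simp add: G_def)
qed

lemma AA_arcsin:
  assumes "0 < y" "y < 1"
  shows "AA y = arcsin (sqrt y) ^ 2"
proof -
  have s: "0 < sqrt y" "sqrt y < 1" using assms by auto
  define t where "t = arcsin (sqrt y)"
  have "t \<in> {-(pi/2)<..<pi/2}" using arcsin_lt_bounded[of "sqrt y"] s by (auto simp: t_def)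
  hence "AA (sin t ^ 2) = t ^ 2" by (rule G_eq)
  moreover have "sin t = sqrt y" unfolding t_def by (rule sin_arcsin) (use s in linarith)+
  ultimately show ?thesis using assms by (simp add: t_def)
qed

lemma D_sums: "(\<lambda>m. 1 / (2 * real (Suc m) ^ 2 * cb (Suc m))) sums ((pi/2)^2)"
proof -
  have "al sums ((pi/2)^2)"
  proof (rule abel_nonneg[where F = "\<lambda>y. arcsin (sqrt y) ^ 2"])
    show "0 \<le> al n" for n using al_bound by simp
    show "(\<lambda>n. al n * y^n) sums (arcsin (sqrt y) ^ 2)" if "0 < y" "y < 1" for y
    proof -
      have y: "\<bar>y\<bar> < 1" using that by simp
      have "(\<lambda>n. al n * y^n) sums AA y" unfolding AA_def by (rule summable_sums[OF al_summable[OF y]])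
      thus ?thesis using AA_arcsin[OF that] by simp
    qed
    have aux: "-1 \<le> sqrt x \<and> sqrt x \<le> 1" if "0 \<le> x" "x \<le> 1" for x::real
    proof -
      have "0 \<le> sqrt x" using that by simp
      moreover have "sqrt x \<le> 1" using that by simp
      ultimately show ?thesis by linarith
    qed
    have "continuous_on {0..1} (\<lambda>y::real. arcsin (sqrt y) ^ 2)"
      by (intro continuous_intros) (use aux in auto)
    hence "((\<lambda>y::real. arcsin (sqrt y) ^ 2) \<longlongrightarrow> arcsin (sqrt 1) ^ 2) (at 1 within {0..1})"
      unfolding continuous_on_def by (metis atLeastAtMost_iff order_refl zero_le_one)
    moreover have "at (1::real) within {0..1} = at_left 1" by (rule at_within_Icc_at_left) simp
    ultimately show "((\<lambda>y. arcsin (sqrt y) ^ 2) \<longlongrightarrow> (pi/2)^2) (at_left (1::real))" by simp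
  qed
  hence "(\<lambda>n. al (Suc n)) sums ((pi/2)^2)" by (subst sums_Suc_iff) simp
  thus ?thesis by (simp add: al_def)
qed


lemma first_part: "(\<lambda>n. cb (Suc n) * (harm (Suc n) / real (Suc n))) sums (pi^2/3)"
proof -
  define F where "F = (\<lambda>k n. cb (Suc n) / ((real k+1)*(real n + real k + 2)))"
  define g where "g = (\<lambda>k. 1 / (real (Suc k) ^ 2 * cb (Suc k)) - 1 / real (Suc k) ^ 2)"
  show ?thesis
  proof (rule double_sums_swap[where F = F and g = g])
    show "0 \<le> F k n" for k n unfolding F_def using cb_pos[of "Suc n"] by simp
    show "(\<lambda>n. F k n) sums g k" for k
    proof -
      have "(\<lambda>n. cb (Suc n) / (real (Suc n) + real (Suc k))) sums
              (1 / (real (Suc k) * cb (Suc k)) - cb 0 / (real 0 + real (Suc k)))"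
        using ucb[of k] by (subst sums_Suc_iff) simp
      hence "(\<lambda>n. cb (Suc n) / (real (Suc n) + real (Suc k)) / real (Suc k)) sums
              ((1 / (real (Suc k) * cb (Suc k)) - cb 0 / (real 0 + real (Suc k))) / real (Suc k))"
        by (rule sums_divide)
      moreover have "cb (Suc n) / (real (Suc n) + real (Suc k)) / real (Suc k) = F k n" for n
        by (simp add: F_def field_simps)
      moreover have "(1 / (real (Suc k) * cb (Suc k)) - cb 0 / (real 0 + real (Suc k))) / real (Suc k) = g k"
      proof -
        have ai: "(1/(real (Suc k)*cb (Suc k)) - 1/real (Suc k))/real (Suc k)
           = 1/(real (Suc k)^2*cb (Suc k)) - 1/real (Suc k)^2"
          by (simp add: power2_eq_square diff_divide_distrib mult_ac)
        show ?thesis by (simp only: cb_0 of_nat_0 add_0_left g_def ai)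
      qed
      ultimately show ?thesis by simp
    qed
    show "(\<lambda>k. F k n) sums (cb (Suc n) * (harm (Suc n) / real (Suc n)))" for n
    proof -
      have "(\<lambda>k. cb (Suc n) * (1/((real k+1)*(real k + real n + 2)))) sums (cb (Suc n) * (harm (Suc n) / real (Suc n)))"
        by (intro sums_mult harm_kernel)
      thus ?thesis by (simp add: F_def add_ac)
    qed
    have a: "(\<lambda>m. 2 * (1 / (2 * real (Suc m) ^ 2 * cb (Suc m)))) sums (2 * (pi/2)^2)"
      by (intro sums_mult D_sums)
    have b: "(\<lambda>n. 1 / real (Suc n) ^ 2) sums (pi^2/6)"
      using inverse_squares_sums by (simp add: add.commute)
    have "(\<lambda>m. 2 * (1 / (2 * real (Suc m) ^ 2 * cb (Suc m))) - 1 / real (Suc m) ^ 2) sums (2 * (pi/2)^2 - pi^2/6)"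
      by (intro sums_diff a b)
    moreover have "2 * (1 / (2 * real (Suc m) ^ 2 * cb (Suc m))) - 1 / real (Suc m) ^ 2 = g m" for m
      by (simp add: g_def)
    moreover have "2 * (pi/2)^2 - pi^2/6 = pi^2/3" by (simp add: power2_eq_square field_simps)
    ultimately show "g sums (pi^2/3)" by simp
  qed
qed

lemma harm_le: "n \<ge> 1 \<Longrightarrow> harm n \<le> ln (real n) + (1::real)"
  using euler_mascheroni_sequence_decreasing[of 1 n] by (simp add: harm_def)

lemma harm_cb_lim: "(\<lambda>N. harm N * cb (Suc N)) \<longlonglongrightarrow> 0"
proof (rule tendsto_sandwich[of "\<lambda>_. 0" _ _ "\<lambda>N. (ln (real N) + 1) / sqrt (2 * real N + 3)"])
  show "\<forall>\<^sub>F n in sequentially. 0 \<le> harm n * cb (Suc n)"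
    using cb_pos by (intro always_eventually allI mult_nonneg_nonneg harm_nonneg) (simp add: less_imp_le)
  show "\<forall>\<^sub>F n in sequentially. harm n * cb (Suc n) \<le> (ln (real n) + 1) / sqrt (2 * real n + 3)"
    using eventually_ge_at_top[of 1]
  proof eventually_elim
    case (elim n)
    have "harm n * cb (Suc n) \<le> (ln (real n) + 1) * (1 / sqrt (2 * real (Suc n) + 1))"
    proof (intro mult_mono harm_le cb_upper elim)
      have "0 \<le> ln (real n)" using elim by simp
      thus "0 \<le> ln (real n) + 1" by simp
      show "0 \<le> cb (Suc n)" using cb_pos[of "Suc n"] by simp
    qed
    also have "2 * real (Suc n) + 1 = 2 * real n + 3" by simp
    finally show ?case by simp
  qed
  show "(\<lambda>N. (ln (real N) + 1) / sqrt (2 * real N + 3)) \<longlonglongrightarrow> 0" by real_asymp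
qed simp

lemma abel_part: "(\<Sum>n<N. harm (Suc n) * (cb (Suc n) - cb (Suc (Suc n))))
   = (\<Sum>n<N. cb (Suc n) / real (Suc n)) - harm N * cb (Suc N)"
proof (induction N)
  case 0 then show ?case by (simp add: harm_def)
next
  case (Suc N)
  show ?case using Suc by (simp add: harm_Suc algebra_simps divide_inverse)
qed

lemma second_part: "(\<lambda>n. harm (Suc n) * cb (Suc n) / real (Suc (Suc n))) sums (4 * ln 2)"
proof -
  have "(\<lambda>N. (\<Sum>n<N. cb (Suc n) / real (Suc n)) - harm N * cb (Suc N)) \<longlonglongrightarrow> 2 * ln 2 - 0"
    using E_sums harm_cb_lim unfolding sums_def by (intro tendsto_diff)
  hence "(\<lambda>n. harm (Suc n) * (cb (Suc n) - cb (Suc (Suc n)))) sums (2 * ln 2)"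
    unfolding sums_def abel_part by simp
  hence "(\<lambda>n. 2 * (harm (Suc n) * (cb (Suc n) - cb (Suc (Suc n))))) sums (2 * (2 * ln 2))"
    by (rule sums_mult)
  moreover have "2 * (harm (Suc n) * (cb (Suc n) - cb (Suc (Suc n)))) = harm (Suc n) * cb (Suc n) / real (Suc (Suc n))" for n
  proof -
    have "cb (Suc (Suc n)) * (2 * real (Suc n) + 2) = cb (Suc n) * (2 * real (Suc n) + 1)"
      using cb_rec2[of "Suc n"] by simp
    hence e: "cb (Suc n) - cb (Suc (Suc n)) = cb (Suc n) / (2 * real (Suc (Suc n)))"
      by (simp add: field_simps)
    have aux2: "\<And>m H c. (m::real) \<noteq> 0 \<Longrightarrow> 2 * (H * (c / (2*m))) = H * c / m" by simp
    show ?thesis unfolding e by (rule aux2) simp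
  qed
  ultimately show ?thesis by simp
qed

lemma aux3:
  fixes B H P x :: real
  assumes x: "x \<ge> 0" and P: "P > 0"
  shows "(B/P) * (H/(x+1)) - H*(B/P)/(x+2) = H*B/((x+1)*(x+2)*P)"
proof -
  have u: "1/(x+1) - 1/(x+2) = 1/((x+1)*(x+2))"
    using aux_uv[of "x+1" "x+2"] x by simp
  have u': "inverse (x+1) - inverse (x+2) = inverse (x+1) * inverse (x+2)"
    using u by (simp add: inverse_eq_divide)
  have "(B/P) * (H/(x+1)) - H*(B/P)/(x+2) = B * inverse P * H * (inverse (x+1) - inverse (x+2))"
    by (simp add: divide_inverse algebra_simps)
  also have "\<dots> = B * inverse P * H * (inverse (x+1) * inverse (x+2))" by (simp only: u')
  also have "\<dots> = H*B/((x+1)*(x+2)*P)"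
    by (simp only: divide_inverse inverse_mult_distrib mult_ac)
  finally show ?thesis .
qed

theorem mainTheorem2:
  shows "(\<lambda>n::nat. harm (n+1) * real ((2*(n+1)) choose (n+1))
            / (real (n+1) * real (n+2) * 2 ^ (2*(n+1))))
         sums (pi^2 / 3 - 4 * ln 2)"
proof -
  have "(\<lambda>n. cb (Suc n) * (harm (Suc n) / real (Suc n)) - harm (Suc n) * cb (Suc n) / real (Suc (Suc n)))
          sums (pi^2/3 - 4 * ln 2)"
    by (intro sums_diff first_part second_part)
  moreover have "cb (Suc n) * (harm (Suc n) / real (Suc n)) - harm (Suc n) * cb (Suc n) / real (Suc (Suc n))
      = harm (n+1) * real ((2*(n+1)) choose (n+1)) / (real (n+1) * real (n+2) * 2 ^ (2*(n+1)))" for n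
  proof -
    have p: "(2::real) ^ (2*(n+1)) = 4 ^ (n+1)" by (simp add: power_mult)
    have c: "cb (Suc n) = real ((2*(n+1)) choose (n+1)) / 4^(n+1)"
      by (simp only: cb_def Suc_eq_plus1)
    have r1: "real (Suc n) = real n + 1" and r2: "real (Suc (Suc n)) = real n + 2"
      and r3: "real (n+1) = real n + 1" and r4: "real (n+2) = real n + 2" by simp_all
    have "cb (Suc n) * (harm (Suc n) / real (Suc n)) - harm (Suc n) * cb (Suc n) / real (Suc (Suc n))
       = (real ((2*(n+1)) choose (n+1)) / 4^(n+1)) * (harm (Suc n) / (real n + 1))
         - harm (Suc n) * (real ((2*(n+1)) choose (n+1)) / 4^(n+1)) / (real n + 2)"
      by (simp only: c r1 r2)
    also have "\<dots> = harm (Suc n) * real ((2*(n+1)) choose (n+1)) / ((real n + 1) * (real n + 2) * 4^(n+1))"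
      by (rule aux3) simp_all
    also have "\<dots> = harm (n+1) * real ((2*(n+1)) choose (n+1)) / (real (n+1) * real (n+2) * 2 ^ (2*(n+1)))"
      by (simp only: r3 r4 p Suc_eq_plus1)
    finally show ?thesis .
  qed
  ultimately show ?thesis by simp
qed

end
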